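(* Let $n\ge1$. (1) Let $X$ be an interval in $\mathcal{K}$ with at least two elements (with the subspace topology). A map $f:X\to X$ has closed graph if and only if there is an integer $\lambda$ with $2\lambda\in X$ such that $f$ is the constant map with value $2\lambda$. (2) A map $f:\mathcal{K}^n\to\mathcal{K}^n$ has closed graph if and only if there are integers $\lambda_1,\ldots,\lambda_n$ such that $f$ is the constant map with value $(2\lambda_1,\ldots,2\lambda_n)$. (3) A map $f:A(\mathcal{K}^n)\to A(\mathcal{K}^n)$ has closed graph if and only if either there are integers $\lambda_1,\ldots,\lambda_n$ such that $f$ is the constant map with value $(2\lambda_1,\ldots,2\lambda_n)$, or $f$ is the constant map with value $\infty$. In particular (cases $n=1,2$ of (3)), every self-map with closed graph on the Khalimsky circle $A(\mathcal{K})$ or on the Khalimsky sphere $A(\mathcal{K}^2)$ is constant.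
   Context: The Khalimsky line $\mathcal{K}$ is $\mathbb{Z}$ equipped with the topology generated by the basis $\{\{2m-1,2m,2m+1\}:m\in\mathbb{Z}\}\cup\{\{2m+1\}:m\in\mathbb{Z}\}$; $\mathcal{K}^n$ is its $n$-fold product with the product topology. An interval in $\mathcal{K}$ is one of: $\varnothing$, $\mathcal{K}$, $\{x\in\mathbb{Z}:a\le x\le b\}$ for integers $a\le b$, $\{x\in\mathbb{Z}:x\ge a\}$ or $\{x\in\mathbb{Z}:x\le a\}$ for an integer $a$. For a topological space $Y$ and a point $\infty\notin Y$, the one-point (Alexandroff) compactification $A(Y)=Y\cup\{\infty\}$ has topology $\{U: U\text{ open in }Y\}\cup\{U\subseteq A(Y):\infty\in U,\ Y\setminus U\text{ is a compact closed subset of }Y\}$. $A(\mathcal{K})$ is called the Khalimsky circle and $A(\mathcal{K}^2)$ the Khalimsky sphere. A map $f:X\to X$ has closed graph if $G_f=\{(x,f(x)):x\in X\}$ is closed in $X\times X$ (product topology); $f$ is not assumed continuous. *)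

theory Defs
  imports "HOL-Analysis.Analysis"
begin

definition khalimsky :: "int topology" where
  "khalimsky = topology_generated_by
     ({{2*m - 1, 2*m, 2*m + 1} | m. True} \<union> {{2*m + 1} | m. True})"

definition khalimsky_interval :: "int set \<Rightarrow> bool" where
  "khalimsky_interval S \<longleftrightarrow>
     S = {} \<or> S = UNIV \<or> (\<exists>a b. a \<le> b \<and> S = {a..b}) \<or>
     (\<exists>a. S = {a..}) \<or> (\<exists>a. S = {..a})"

text \<open>The n-fold product K^n; points are functions nat => int, extensional
  outside the index set {..<n}.\<close>
definition khalimsky_power :: "nat \<Rightarrow> (nat \<Rightarrow> int) topology" where
  "khalimsky_power n = product_topology (\<lambda>_. khalimsky) {..<n}"

text \<open>One-point (Alexandroff) compactification; the point at infinity is None,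
  and y in Y is represented by Some y.\<close>
definition alexandroff :: "'a topology \<Rightarrow> 'a option topology" where
  "alexandroff Y = topology (\<lambda>U.
      (\<exists>V. openin Y V \<and> U = Some ` V) \<or>
      (None \<in> U \<and> U \<subseteq> insert None (Some ` topspace Y) \<and>
       compactin Y {y \<in> topspace Y. Some y \<notin> U} \<and>
       closedin Y {y \<in> topspace Y. Some y \<notin> U}))"

definition closed_graph :: "'a topology \<Rightarrow> ('a \<Rightarrow> 'a) \<Rightarrow> bool" where
  "closed_graph X f \<longleftrightarrow>
     closedin (prod_topology X X) {(x, f x) | x. x \<in> topspace X}"

end

theory Submission
  imports Defs
begin


definition nb :: "int \<Rightarrow> int set" where
  "nb x = (if even x then {x-1,x,x+1} else {x})"

lemma nb_self: "x \<in> nb x" by (simp add: nb_def)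

lemma nb_basis: "nb x \<in> ({{2*m - 1, 2*m, 2*m + 1} | m. True} \<union> {{2*m + 1} | m. True})"
proof (cases "even x")
  case True
  then obtain m where "x = 2*m" by blast
  then show ?thesis using True by (auto simp: nb_def)
next
  case False
  then obtain m where "x = 2*m+1" using oddE by blast
  then show ?thesis using False by (auto simp: nb_def)
qed

lemma kopen: "openin khalimsky U \<longleftrightarrow> (\<forall>x\<in>U. nb x \<subseteq> U)"
proof
  assume "openin khalimsky U"
  then have "generate_topology_on ({{2*m - 1, 2*m, 2*m + 1} | m. True} \<union> {{2*m + 1} | m. True}) U"
    unfolding khalimsky_def openin_topology_generated_by_iff .
  then show "\<forall>x\<in>U. nb x \<subseteq> U"
  proof induct
    case (Basis s)
    then show ?case by (auto simp: nb_def)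
  qed blast+
next
  assume H: "\<forall>x\<in>U. nb x \<subseteq> U"
  have "U = \<Union> (nb ` U)" using H nb_self by blast
  moreover have "generate_topology_on ({{2*m - 1, 2*m, 2*m + 1} | m. True} \<union> {{2*m + 1} | m. True}) (\<Union> (nb ` U))"
    by (rule generate_topology_on.UN) (metis (no_types, lifting) imageE generate_topology_on.Basis nb_basis)
  ultimately show "openin khalimsky U"
    unfolding khalimsky_def openin_topology_generated_by_iff by simp
qed

lemma topspace_k [simp]: "topspace khalimsky = UNIV"
  proof -
  have "openin khalimsky UNIV" using kopen[of UNIV] by simp
  then show ?thesis using openin_subset by blast
qed

lemma nb_open: "openin khalimsky (nb x)"
  unfolding kopen by (auto simp: nb_def)

lemma closed_even: "even z \<Longrightarrow> closedin khalimsky {z}"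
  unfolding closedin_def kopen by (auto simp: nb_def)

lemma not_compact_k: "\<not> compact_space khalimsky"
proof
  assume "compact_space khalimsky"
  then have "compactin khalimsky UNIV" by (simp add: compact_space_def)
  then obtain F where F: "finite F" "F \<subseteq> range nb" "UNIV \<subseteq> \<Union>F"
    unfolding compactin_def using nb_open nb_self
    by (smt (verit, ccfv_threshold) UNIV_I UN_I imageE subsetI)
  have "\<forall>A\<in>F. finite A" using F(2) by (auto simp: nb_def)
  then have "finite (\<Union>F)" using F(1) by blast
  then show False using F(3) infinite_UNIV_int finite_subset by blast
qed



lemma cg_open:
  assumes "closed_graph X f" "p \<in> topspace X" "q \<in> topspace X" "q \<noteq> f p"
  obtains U V where "openin X U" "openin X V" "p \<in> U" "q \<in> V"
    "\<And>x. x \<in> U \<Longrightarrow> x \<in> topspace X \<Longrightarrow> f x \<notin> V"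
proof -
  let ?G = "{(x, f x) | x. x \<in> topspace X}"
  have o: "openin (prod_topology X X) (topspace (prod_topology X X) - ?G)"
    using assms(1) unfolding closed_graph_def closedin_def by blast
  have "(p,q) \<notin> ?G" using assms(4) by blast
  moreover have "(p,q) \<in> topspace (prod_topology X X)" using assms(2,3) by (simp add: topspace_prod_topology)
  ultimately have pq: "(p,q) \<in> topspace (prod_topology X X) - ?G" by blast
  have "\<exists>U V. openin X U \<and> openin X V \<and> p \<in> U \<and> q \<in> V \<and> U \<times> V \<subseteq> topspace (prod_topology X X) - ?G"
    using o pq unfolding openin_prod_topology_alt by blast
  then obtain U V where UV: "openin X U" "openin X V" "p \<in> U" "q \<in> V"
     "U \<times> V \<subseteq> topspace (prod_topology X X) - ?G"
    by blast
  show ?thesis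
  proof (rule that[OF UV(1-4)])
    fix x assume "x \<in> U" "x \<in> topspace X"
    then have "(x, f x) \<in> ?G" by blast
    then show "f x \<notin> V" using UV(5) \<open>x \<in> U\<close> by blast
  qed
qed

lemma cg_closed_point:
  assumes "closed_graph X f" "f ` topspace X \<subseteq> topspace X" "p \<in> topspace X"
  shows "closedin X {f p}"
  unfolding closedin_def
proof
  show "{f p} \<subseteq> topspace X" using assms by auto
  show "openin X (topspace X - {f p})"
    unfolding openin_subopen[of X "topspace X - {f p}"]
  proof
    fix q assume q: "q \<in> topspace X - {f p}"
    then obtain U V where "openin X U" "openin X V" "p \<in> U" "q \<in> V"
      "\<And>x. x \<in> U \<Longrightarrow> x \<in> topspace X \<Longrightarrow> f x \<notin> V"
      using cg_open[OF assms(1) assms(3), of q] by auto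
    moreover have "V \<subseteq> topspace X" using \<open>openin X V\<close> openin_subset by blast
    moreover have "f p \<notin> V" using \<open>\<And>x. x \<in> U \<Longrightarrow> x \<in> topspace X \<Longrightarrow> f x \<notin> V\<close> \<open>p \<in> U\<close> assms(3) by blast
    ultimately show "\<exists>T. openin X T \<and> q \<in> T \<and> T \<subseteq> topspace X - {f p}"
      by blast
  qed
qed

lemma cg_const_lim:
  assumes "closed_graph X f" "f ` topspace X \<subseteq> topspace X" "p \<in> topspace X" "q \<in> topspace X"
    "\<And>U. openin X U \<Longrightarrow> p \<in> U \<Longrightarrow> \<exists>p'\<in>U. f p' = q"
  shows "f p = q"
proof (rule ccontr)
  assume "f p \<noteq> q"
  then obtain U V where UV: "openin X U" "openin X V" "p \<in> U" "q \<in> V"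
      "\<And>x. x \<in> U \<Longrightarrow> x \<in> topspace X \<Longrightarrow> f x \<notin> V"
    using cg_open[OF assms(1) assms(3,4)] by metis
  obtain p' where "p' \<in> U" "f p' = q" using assms(5) UV by blast
  then show False using UV openin_subset by blast
qed

lemma cg_const:
  assumes "\<And>x. x \<in> topspace X \<Longrightarrow> f x = c" "c \<in> topspace X" "closedin X {c}"
  shows "closed_graph X f"
proof -
  have "{(x, f x) | x. x \<in> topspace X} = topspace X \<times> {c}" using assms(1) by auto
  then show ?thesis unfolding closed_graph_def
    using assms(3) by (simp add: closedin_prod_Times_iff)
qed



lemma kp_top: "topspace (khalimsky_power n) = PiE {..<n} (\<lambda>_. UNIV)"
  by (simp add: khalimsky_power_def)

lemma kp_nbhd:
  assumes "openin (khalimsky_power n) U" "x \<in> U" "y \<in> PiE {..<n} (\<lambda>i. nb (x i))"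
  shows "y \<in> U"
proof -
  obtain V where V: "\<forall>i\<in>{..<n}. openin khalimsky (V i)" "x \<in> PiE {..<n} V" "PiE {..<n} V \<subseteq> U"
    using assms(1,2) unfolding khalimsky_power_def openin_product_topology_alt by blast
  have "\<And>i. i < n \<Longrightarrow> nb (x i) \<subseteq> V i" using V(1,2) kopen by (auto simp: PiE_iff)
  then have "y \<in> PiE {..<n} V" using assms(3) by (auto simp: PiE_iff)
  then show ?thesis using V(3) by blast
qed

lemma kp_closed_even:
  assumes "closedin (khalimsky_power n) {z}" "i < n"
  shows "even (z i)"
proof (rule ccontr)
  assume odd: "\<not> even (z i)"
  have zt: "z \<in> PiE {..<n} (\<lambda>_. UNIV)" using closedin_subset[OF assms(1)] kp_top by auto
  define y where "y = z(i := z i + 1)"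
  have yt: "y \<in> PiE {..<n} (\<lambda>_. UNIV)" using zt assms(2) by (auto simp: y_def PiE_iff extensional_def)
  have "y \<noteq> z" by (metis y_def fun_upd_same less_add_one order_less_irrefl)
  have o: "openin (khalimsky_power n) (topspace (khalimsky_power n) - {z})"
    using assms(1) closedin_def by blast
  have "z \<in> PiE {..<n} (\<lambda>j. nb (y j))"
    using zt odd by (auto simp: PiE_iff y_def nb_def)
  then have "z \<in> topspace (khalimsky_power n) - {z}"
    using kp_nbhd[OF o, of y z] yt \<open>y \<noteq> z\<close> kp_top by auto
  then show False by blast
qed

lemma kp_closed_pt:
  assumes "\<And>i. i < n \<Longrightarrow> even (z i)" "z \<in> extensional {..<n}"
  shows "closedin (khalimsky_power n) {z}"
proof -
  have "{z} = PiE {..<n} (\<lambda>i. {z i})"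
  proof (intro set_eqI iffI)
    fix x assume "x \<in> {z}" then show "x \<in> PiE {..<n} (\<lambda>i. {z i})" using assms(2) by (simp add: PiE_iff)
  next
    fix x assume x: "x \<in> PiE {..<n} (\<lambda>i. {z i})"
    have "x i = z i" for i
    proof (cases "i < n")
      case True then show ?thesis using x by (auto simp: PiE_iff)
    next
      case False then show ?thesis using x assms(2) by (auto simp: PiE_iff extensional_def)
    qed
    then show "x \<in> {z}" by auto
  qed
  then show ?thesis unfolding khalimsky_power_def
    using assms(1) closed_even by (simp add: closedin_product_topology)
qed

lemma shift_nat:
  fixes g :: "(nat \<Rightarrow> int) \<Rightarrow> 'b" and n :: nat
  assumes "\<forall>x\<in>PiE {..<n} (\<lambda>_. UNIV). \<forall>i<n. g x = g (x(i := x i + 1))"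
    "x \<in> PiE {..<n} (\<lambda>_. UNIV)" "i < n"
  shows "g x = g (x(i := x i + int m))"
proof (induction m)
  case 0 then show ?case by simp
next
  case (Suc m)
  let ?x = "x(i := x i + int m)"
  have "?x \<in> PiE {..<n} (\<lambda>_. UNIV)" using assms(2,3) by (auto simp: PiE_iff extensional_def)
  then have "g ?x = g (?x(i := ?x i + 1))" using assms(1,3) by blast
  moreover have "?x(i := ?x i + 1) = x(i := x i + int (Suc m))" by (simp add: algebra_simps)
  ultimately show ?case using Suc by metis
qed

lemma shift_int:
  fixes g :: "(nat \<Rightarrow> int) \<Rightarrow> 'b" and n :: nat and k :: int
  assumes "\<forall>x\<in>PiE {..<n} (\<lambda>_. UNIV). \<forall>i<n. g x = g (x(i := x i + 1))"
    "x \<in> PiE {..<n} (\<lambda>_. UNIV)" "i < n"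
  shows "g x = g (x(i := x i + k))"
proof (cases "k \<ge> 0")
  case True
  then show ?thesis using shift_nat[OF assms, of "nat k"] by simp
next
  case False
  let ?x = "x(i := x i + k)"
  have "?x \<in> PiE {..<n} (\<lambda>_. UNIV)" using assms(2,3) by (auto simp: PiE_iff extensional_def)
  then have "g ?x = g (?x(i := ?x i + int (nat (-k))))" using shift_nat[OF assms(1) _ assms(3)] by blast
  moreover have "?x(i := ?x i + int (nat (-k))) = x" using False by auto
  ultimately show ?thesis by simp
qed

lemma shift_const:
  fixes g :: "(nat \<Rightarrow> int) \<Rightarrow> 'b" and n :: nat
  assumes "\<forall>x\<in>PiE {..<n} (\<lambda>_. UNIV). \<forall>i<n. g x = g (x(i := x i + 1))"
    "x \<in> PiE {..<n} (\<lambda>_. UNIV)"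
  shows "g x = g (restrict (\<lambda>_. 0) {..<n})"
proof -
  have "\<forall>x\<in>PiE {..<n} (\<lambda>_. UNIV). (\<forall>i. m \<le> i \<longrightarrow> i < n \<longrightarrow> x i = 0) \<longrightarrow>
          g x = g (restrict (\<lambda>_. 0) {..<n})" for m
  proof (induction m)
    case 0
    show ?case
    proof (intro ballI impI)
      fix x :: "nat \<Rightarrow> int" assume "x \<in> PiE {..<n} (\<lambda>_. UNIV)" "\<forall>i. 0 \<le> i \<longrightarrow> i < n \<longrightarrow> x i = 0"
      then have "x = restrict (\<lambda>_. 0) {..<n}"
      proof -
        assume a: "x \<in> PiE {..<n} (\<lambda>_. UNIV)" "\<forall>i. 0 \<le> i \<longrightarrow> i < n \<longrightarrow> x i = 0"
        show ?thesis
        proof (rule ext)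
          fix i show "x i = restrict (\<lambda>_. 0) {..<n} i"
          proof (cases "i < n")
            case True then show ?thesis using a(2) by simp
          next
            case False
            then have "x i = undefined" using a(1) PiE_arb[of x "{..<n}" "\<lambda>_. UNIV" i] by simp
            then show ?thesis using False by simp
          qed
        qed
      qed
      then show "g x = g (restrict (\<lambda>_. 0) {..<n})" by simp
    qed
  next
    case (Suc m)
    show ?case
    proof (intro ballI impI)
      fix x :: "nat \<Rightarrow> int" assume x: "x \<in> PiE {..<n} (\<lambda>_. UNIV)" "\<forall>i. Suc m \<le> i \<longrightarrow> i < n \<longrightarrow> x i = 0"
      show "g x = g (restrict (\<lambda>_. 0) {..<n})"
      proof (cases "m < n")
        case True
        let ?x = "x(m := x m + (- x m))"
        have "?x \<in> PiE {..<n} (\<lambda>_. UNIV)" using x True by (auto simp: PiE_iff extensional_def)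
        moreover have "\<forall>i. m \<le> i \<longrightarrow> i < n \<longrightarrow> ?x i = 0"
        proof (intro allI impI)
          fix i assume "m \<le> i" "i < n"
          then show "?x i = 0" using x(2) by (cases "i = m") auto
        qed
        ultimately have "g ?x = g (restrict (\<lambda>_. 0) {..<n})" using Suc.IH by blast
        moreover have "g x = g ?x" by (rule shift_int[OF assms(1) x(1) True])
        ultimately show ?thesis by (rule trans[rotated])
      next
        case False
        then have "\<forall>i. m \<le> i \<longrightarrow> i < n \<longrightarrow> x i = 0" by auto
        then show ?thesis using Suc.IH x(1) by blast
      qed
    qed
  qed
  note H = this[of n]
  have h: "\<forall>i. n \<le> i \<longrightarrow> i < n \<longrightarrow> x i = 0" by auto
  show ?thesis using H assms(2) h by blast
qed

lemma nb_step:
  fixes g :: "(nat \<Rightarrow> int) \<Rightarrow> 'b" and n :: nat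
  assumes "\<forall>x\<in>PiE {..<n} (\<lambda>_. UNIV). \<forall>y\<in>PiE {..<n} (\<lambda>i. nb (x i)). g y = g x"
  shows "\<forall>x\<in>PiE {..<n} (\<lambda>_. UNIV). \<forall>i<n. g x = g (x(i := x i + 1))"
proof (intro ballI allI impI)
  fix x :: "nat \<Rightarrow> int" and i assume x: "x \<in> PiE {..<n} (\<lambda>_. UNIV)" and i: "i < n"
  let ?y = "x(i := x i + 1)"
  have y: "?y \<in> PiE {..<n} (\<lambda>_. UNIV)" using x i by (auto simp: PiE_iff extensional_def)
  show "g x = g ?y"
  proof (cases "even (x i)")
    case True
    then have "?y \<in> PiE {..<n} (\<lambda>j. nb (x j))" using x i by (auto simp: PiE_iff nb_def extensional_def)
    then show ?thesis using assms x by metis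
  next
    case False
    then have "x \<in> PiE {..<n} (\<lambda>j. nb (?y j))" using x i by (auto simp: PiE_iff nb_def extensional_def)
    then show ?thesis using assms y by metis
  qed
qed



definition aopen :: "'a topology \<Rightarrow> 'a option set \<Rightarrow> bool" where
  "aopen Y U \<longleftrightarrow> U \<subseteq> insert None (Some ` topspace Y) \<and> openin Y (Some -` U) \<and>
     (None \<in> U \<longrightarrow> compactin Y (topspace Y - Some -` U))"

lemma alex_pred_eq:
  "(\<lambda>U. (\<exists>V. openin Y V \<and> U = Some ` V) \<or>
      (None \<in> U \<and> U \<subseteq> insert None (Some ` topspace Y) \<and>
       compactin Y {y \<in> topspace Y. Some y \<notin> U} \<and>
       closedin Y {y \<in> topspace Y. Some y \<notin> U})) = aopen Y"
proof (rule ext)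
  fix U :: "'a option set"
  have e: "{y \<in> topspace Y. Some y \<notin> U} = topspace Y - Some -` U" by auto
  show "((\<exists>V. openin Y V \<and> U = Some ` V) \<or>
      (None \<in> U \<and> U \<subseteq> insert None (Some ` topspace Y) \<and>
       compactin Y {y \<in> topspace Y. Some y \<notin> U} \<and>
       closedin Y {y \<in> topspace Y. Some y \<notin> U})) = aopen Y U"
  proof (cases "None \<in> U")
    case True
    have eqv: "closedin Y (topspace Y - Some -` U) \<longleftrightarrow> openin Y (Some -` U)"
      if sub: "U \<subseteq> insert None (Some ` topspace Y)"
    proof -
      have "Some -` U \<subseteq> topspace Y" using sub by auto
      then have "topspace Y - (topspace Y - Some -` U) = Some -` U" by auto
      then show ?thesis unfolding closedin_def by simp
    qed
    have nV: "\<not> (\<exists>V. openin Y V \<and> U = Some ` V)" using True by auto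
    show ?thesis unfolding aopen_def e
    proof
      assume "(\<exists>V. openin Y V \<and> U = Some ` V) \<or>
        None \<in> U \<and> U \<subseteq> insert None (Some ` topspace Y) \<and>
        compactin Y (topspace Y - Some -` U) \<and> closedin Y (topspace Y - Some -` U)"
      then have h: "U \<subseteq> insert None (Some ` topspace Y)" "compactin Y (topspace Y - Some -` U)"
        "closedin Y (topspace Y - Some -` U)" using nV by blast+
      show "U \<subseteq> insert None (Some ` topspace Y) \<and> openin Y (Some -` U) \<and>
        (None \<in> U \<longrightarrow> compactin Y (topspace Y - Some -` U))"
        using h eqv[OF h(1)] by blast
    next
      assume h: "U \<subseteq> insert None (Some ` topspace Y) \<and> openin Y (Some -` U) \<and>
        (None \<in> U \<longrightarrow> compactin Y (topspace Y - Some -` U))"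
      then show "(\<exists>V. openin Y V \<and> U = Some ` V) \<or>
        None \<in> U \<and> U \<subseteq> insert None (Some ` topspace Y) \<and>
        compactin Y (topspace Y - Some -` U) \<and> closedin Y (topspace Y - Some -` U)"
        using True eqv by blast
    qed
  next
    case False
    show ?thesis
    proof
      assume "(\<exists>V. openin Y V \<and> U = Some ` V) \<or>
      (None \<in> U \<and> U \<subseteq> insert None (Some ` topspace Y) \<and>
       compactin Y {y \<in> topspace Y. Some y \<notin> U} \<and>
       closedin Y {y \<in> topspace Y. Some y \<notin> U})"
      then obtain V where V: "openin Y V" "U = Some ` V" using False by blast
      then have "Some -` U = V" by auto
      moreover have Vs: "V \<subseteq> topspace Y" using V(1) openin_subset by blast
      ultimately show "aopen Y U" using V False unfolding aopen_def by auto
    next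
      assume "aopen Y U"
      then have o: "openin Y (Some -` U)" unfolding aopen_def by blast
      have "U = Some ` (Some -` U)"
      proof (intro set_eqI iffI)
        fix x assume x: "x \<in> U"
        then obtain y where "x = Some y" using False by (cases x) auto
        then show "x \<in> Some ` (Some -` U)" using x by auto
      next
        fix x assume "x \<in> Some ` (Some -` U)" then show "x \<in> U" by auto
      qed
      note o this
      then show "(\<exists>V. openin Y V \<and> U = Some ` V) \<or>
      (None \<in> U \<and> U \<subseteq> insert None (Some ` topspace Y) \<and>
       compactin Y {y \<in> topspace Y. Some y \<notin> U} \<and>
       closedin Y {y \<in> topspace Y. Some y \<notin> U})" by blast
    qed
  qed
qed

lemma istopology_aopen: "istopology (aopen Y)"
  unfolding istopology_def
proof (intro conjI allI impI)
  fix S T assume S: "aopen Y S" and T: "aopen Y T"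
  have e1: "Some -` (S \<inter> T) = Some -` S \<inter> Some -` T" by auto
  have e2: "topspace Y - Some -` (S \<inter> T) = (topspace Y - Some -` S) \<union> (topspace Y - Some -` T)" by auto
  have a: "S \<inter> T \<subseteq> insert None (Some ` topspace Y)" using S unfolding aopen_def by blast
  have b: "openin Y (Some -` (S \<inter> T))" unfolding e1 using S T unfolding aopen_def by (intro openin_Int) blast+
  have c: "compactin Y (topspace Y - Some -` (S \<inter> T))" if N: "None \<in> S \<inter> T"
  proof -
    have "compactin Y (topspace Y - Some -` S)" using S N unfolding aopen_def by blast
    moreover have "compactin Y (topspace Y - Some -` T)" using T N unfolding aopen_def by blast
    ultimately show ?thesis unfolding e2 by (rule compactin_Un)
  qed
  show "aopen Y (S \<inter> T)" unfolding aopen_def using a b c by blast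
next
  fix K assume K: "\<forall>S\<in>K. aopen Y S"
  have pre: "Some -` \<Union>K = \<Union> ((\<lambda>S. Some -` S) ` K)" by auto
  have op: "openin Y (Some -` \<Union>K)" unfolding pre
  proof (rule openin_Union)
    show "\<And>S. S \<in> (\<lambda>S. Some -` S) ` K \<Longrightarrow> openin Y S" using K unfolding aopen_def by blast
  qed
  have sub: "\<Union>K \<subseteq> insert None (Some ` topspace Y)" using K unfolding aopen_def by blast
  have "compactin Y (topspace Y - Some -` \<Union>K)" if N: "None \<in> \<Union>K"
  proof -
    obtain S where S: "S \<in> K" "None \<in> S" using N by blast
    then have c: "compactin Y (topspace Y - Some -` S)" using K unfolding aopen_def by blast
    have "topspace Y - Some -` \<Union>K \<subseteq> topspace Y - Some -` S" using S by auto
    moreover have "closedin Y (topspace Y - Some -` \<Union>K)" using op by (rule closedin_diff[OF closedin_topspace])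
    ultimately show ?thesis using c closed_compactin by blast
  qed
  then show "aopen Y (\<Union>K)" using op sub unfolding aopen_def by blast
qed

lemma openin_alex: "openin (alexandroff Y) U \<longleftrightarrow> aopen Y U"
proof -
  have "openin (topology (aopen Y)) = aopen Y" by (rule topology_inverse'[OF istopology_aopen])
  then show ?thesis unfolding alexandroff_def alex_pred_eq by simp
qed

lemma topspace_alex: "topspace (alexandroff Y) = insert None (Some ` topspace Y)"
proof
  have "aopen Y (topspace (alexandroff Y))" using openin_topspace[of "alexandroff Y"] openin_alex by blast
  then show "topspace (alexandroff Y) \<subseteq> insert None (Some ` topspace Y)"
    unfolding aopen_def by blast
  have e: "Some -` insert None (Some ` topspace Y) = topspace Y" by auto
  have "aopen Y (insert None (Some ` topspace Y))" unfolding aopen_def e by simp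
  then have "openin (alexandroff Y) (insert None (Some ` topspace Y))" using openin_alex by blast
  then show "insert None (Some ` topspace Y) \<subseteq> topspace (alexandroff Y)"
    by (rule openin_subset)
qed

lemma alex_closed_Some:
  assumes "closedin (alexandroff Y) {Some z}"
  shows "closedin Y {z}"
proof -
  have "openin (alexandroff Y) (topspace (alexandroff Y) - {Some z})" using assms unfolding closedin_def by blast
  then have o: "aopen Y (topspace (alexandroff Y) - {Some z})" using openin_alex by blast
  have e: "Some -` (topspace (alexandroff Y) - {Some z}) = topspace Y - {z}" unfolding topspace_alex by auto
  have "Some z \<in> topspace (alexandroff Y)" using closedin_subset[OF assms] by blast
  then have z: "z \<in> topspace Y" unfolding topspace_alex by auto
  have "openin Y (topspace Y - {z})" using o unfolding aopen_def e by blast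
  then show ?thesis unfolding closedin_def using z by blast
qed

lemma alex_closed_Some2:
  assumes "closedin Y {z}"
  shows "closedin (alexandroff Y) {Some z}"
proof -
  have z: "z \<in> topspace Y" using closedin_subset[OF assms] by auto
  have e: "Some -` (topspace (alexandroff Y) - {Some z}) = topspace Y - {z}" unfolding topspace_alex by auto
  have e2: "topspace Y - (topspace Y - {z}) = {z}" using z by auto
  have s: "topspace (alexandroff Y) - {Some z} \<subseteq> insert None (Some ` topspace Y)"
    unfolding topspace_alex by blast
  have "openin Y (topspace Y - {z})" using assms unfolding closedin_def by blast
  moreover have "compactin Y {z}" using z by simp
  ultimately have "aopen Y (topspace (alexandroff Y) - {Some z})" unfolding aopen_def e e2 using s by blast
  then have "openin (alexandroff Y) (topspace (alexandroff Y) - {Some z})" using openin_alex by blast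
  moreover have "{Some z} \<subseteq> topspace (alexandroff Y)" unfolding topspace_alex using z by blast
  ultimately show ?thesis unfolding closedin_def by blast
qed

lemma alex_closed_None: "closedin (alexandroff Y) {None}"
proof -
  have e: "topspace (alexandroff Y) - {None} = Some ` topspace Y" unfolding topspace_alex by auto
  have e2: "Some -` (Some ` topspace Y) = topspace Y" by auto
  have "aopen Y (Some ` topspace Y)" unfolding aopen_def e2 by auto
  then have "openin (alexandroff Y) (topspace (alexandroff Y) - {None})" unfolding e using openin_alex by blast
  moreover have "{None} \<subseteq> topspace (alexandroff Y)" unfolding topspace_alex by blast
  ultimately show ?thesis unfolding closedin_def by blast
qed

lemma alex_None_nbhd:
  assumes "openin (alexandroff Y) U" "None \<in> U" "\<not> compact_space Y"
  shows "\<exists>x\<in>topspace Y. Some x \<in> U"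
proof (rule ccontr)
  assume "\<not> ?thesis"
  then have e: "topspace Y - Some -` U = topspace Y" by auto
  have "aopen Y U" using assms(1) openin_alex by blast
  then have "compactin Y (topspace Y - Some -` U)" using assms(2) unfolding aopen_def by blast
  then have "compact_space Y" unfolding e compact_space_def .
  then show False using assms(3) by blast
qed

lemma kp_not_compact:
  assumes "n \<ge> 1" shows "\<not> compact_space (khalimsky_power n)"
proof
  assume c: "compact_space (khalimsky_power n)"
  have "restrict (\<lambda>_. 0) {..<n} \<in> topspace (khalimsky_power n)" by (simp add: kp_top)
  then have nt: "khalimsky_power n \<noteq> trivial_topology" using null_topspace_iff_trivial by force
  have "khalimsky_power n = trivial_topology \<or> (\<forall>i\<in>{..<n}. compact_space khalimsky)"
    using c unfolding khalimsky_power_def by (simp only: compact_space_product_topology)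
  moreover have "0 \<in> {..<n}" using assms by simp
  ultimately have "compact_space khalimsky" using nt by blast
  then show False using not_compact_k by blast
qed


lemma interval_between:
  assumes "khalimsky_interval S" "a \<in> S" "b \<in> S" "a \<le> c" "c \<le> b"
  shows "c \<in> S"
  using assms unfolding khalimsky_interval_def by auto

lemma interval_nbr:
  assumes "khalimsky_interval S" "a \<in> S" "b \<in> S" "a \<noteq> b" "z \<in> S"
  shows "z + 1 \<in> S \<or> z - 1 \<in> S"
proof (cases "z < max a b")
  case True
  then have "z + 1 \<in> S" using interval_between[OF assms(1) assms(5), of "max a b"] assms(2,3)
    by (cases "a \<le> b") (auto simp: max_def)
  then show ?thesis by blast
next
  case False
  then have "min a b < z" using assms(4) by (auto simp: min_def max_def)
  then have "z - 1 \<in> S" using interval_between[OF assms(1), of "min a b" z] assms(2,3,5)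
    by (cases "a \<le> b") (auto simp: min_def)
  then show ?thesis by blast
qed

lemma part1:
  fixes S :: "int set" and f :: "int \<Rightarrow> int"
  assumes I: "khalimsky_interval S" and ab: "a \<in> S" "b \<in> S" "a \<noteq> b" and fS: "f ` S \<subseteq> S"
  shows "closed_graph (subtopology khalimsky S) f \<longleftrightarrow>
        (\<exists>l::int. 2 * l \<in> S \<and> (\<forall>x\<in>S. f x = 2 * l))"
proof -
  let ?X = "subtopology khalimsky S"
  have top: "topspace ?X = S" by simp
  show ?thesis
  proof
    assume cg: "closed_graph ?X f"
    have fmap: "f ` topspace ?X \<subseteq> topspace ?X" using fS top by simp
    have par: "even (f x)" if x: "x \<in> S" for x
    proof (rule ccontr)
      assume odd: "\<not> even (f x)"
      let ?z = "f x"
      have zS: "?z \<in> S" using fS x by blast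
      obtain w where w: "w \<in> S" "w = ?z + 1 \<or> w = ?z - 1"
        using interval_nbr[OF I ab zS] by blast
      have "closedin ?X {?z}" using cg_closed_point[OF cg fmap] x top by simp
      then have "openin ?X (S - {?z})" unfolding closedin_def top by blast
      then obtain T where T: "openin khalimsky T" "S - {?z} = T \<inter> S"
        unfolding openin_subtopology by blast
      have "w \<noteq> ?z" using w by auto
      then have "w \<in> T" using T w by blast
      then have "nb w \<subseteq> T" using T kopen by blast
      moreover have "?z \<in> nb w" using w odd by (auto simp: nb_def)
      ultimately have "?z \<in> S - {?z}" using T zS by blast
      then show False by blast
    qed
    have loc: "f e = f u" if "e \<in> S" "u \<in> S" "u \<in> nb e" for e u
    proof (rule cg_const_lim[OF cg fmap])
      show "e \<in> topspace ?X" "f u \<in> topspace ?X" using that fS by auto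
      fix U assume "openin ?X U" "e \<in> U"
      then obtain T where T: "openin khalimsky T" "U = T \<inter> S" unfolding openin_subtopology by blast
      then have "nb e \<subseteq> T" using \<open>e \<in> U\<close> kopen by blast
      then show "\<exists>p'\<in>U. f p' = f u" using T that by blast
    qed
    have step: "f x = f (x + 1)" if "x \<in> S" "x + 1 \<in> S" for x
    proof (cases "even x")
      case True
      then show ?thesis using loc[of x "x+1"] that by (auto simp: nb_def)
    next
      case False
      then have "x \<in> nb (x+1)" by (auto simp: nb_def)
      then show ?thesis using loc[of "x+1" x] that by auto
    qed
    have up: "a + int k \<in> S \<longrightarrow> f (a + int k) = f a" for k
    proof (induction k)
      case 0 then show ?case by simp
    next
      case (Suc k)
      show ?case
      proof
        assume h: "a + int (Suc k) \<in> S"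
        then have "a + int k \<in> S" using interval_between[OF I ab(1) h, of "a + int k"] by simp
        moreover have "a + int k + 1 = a + int (Suc k)" by simp
        ultimately show "f (a + int (Suc k)) = f a" using Suc step[of "a + int k"] h by metis
      qed
    qed
    have down: "a - int k \<in> S \<longrightarrow> f (a - int k) = f a" for k
    proof (induction k)
      case 0 then show ?case by simp
    next
      case (Suc k)
      show ?case
      proof
        assume h: "a - int (Suc k) \<in> S"
        then have h2: "a - int k \<in> S" using interval_between[OF I h ab(1), of "a - int k"] by simp
        have "a - int (Suc k) + 1 = a - int k" by simp
        then show "f (a - int (Suc k)) = f a" using Suc step[of "a - int (Suc k)"] h h2 by metis
      qed
    qed
    have const: "f x = f a" if "x \<in> S" for x
    proof (cases "x \<ge> a")
      case True
      then have "x = a + int (nat (x - a))" by simp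
      then show ?thesis using up[of "nat (x - a)"] that by metis
    next
      case False
      then have "x = a - int (nat (a - x))" by simp
      then show ?thesis using down[of "nat (a - x)"] that by metis
    qed
    have "f a = 2 * (f a div 2)" using par[OF ab(1)] by simp
    moreover have "f a \<in> S" using fS ab by blast
    ultimately show "\<exists>l::int. 2 * l \<in> S \<and> (\<forall>x\<in>S. f x = 2 * l)" using const by metis
  next
    assume "\<exists>l::int. 2 * l \<in> S \<and> (\<forall>x\<in>S. f x = 2 * l)"
    then obtain l where l: "2 * l \<in> S" "\<forall>x\<in>S. f x = 2 * l" by blast
    have "closedin ?X {2 * l}" unfolding closedin_subtopology
      using closed_even[of "2*l"] l(1) by auto
    then show "closed_graph ?X f" using cg_const[of ?X f "2*l"] l by simp
  qed
qed

lemma part2: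
  fixes f :: "(nat \<Rightarrow> int) \<Rightarrow> (nat \<Rightarrow> int)"
  assumes fm: "f ` topspace (khalimsky_power n) \<subseteq> topspace (khalimsky_power n)"
  shows "closed_graph (khalimsky_power n) f \<longleftrightarrow>
        (\<exists>l::nat \<Rightarrow> int. \<forall>x\<in>topspace (khalimsky_power n).
            f x = restrict (\<lambda>i. 2 * l i) {..<n})"
proof
  assume cg: "closed_graph (khalimsky_power n) f"
  have loc: "\<forall>x\<in>PiE {..<n} (\<lambda>_. UNIV). \<forall>y\<in>PiE {..<n} (\<lambda>i. nb (x i)). f y = f x"
  proof (intro ballI)
    fix x y assume x: "x \<in> PiE {..<n} (\<lambda>_. UNIV)" and y: "y \<in> PiE {..<n} (\<lambda>i. nb (x i))"
    have yt: "y \<in> PiE {..<n} (\<lambda>_. UNIV)" using y by (auto simp: PiE_iff)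
    have "f x = f y"
    proof (rule cg_const_lim[OF cg fm])
      show "x \<in> topspace (khalimsky_power n)" using x kp_top by simp
      show "f y \<in> topspace (khalimsky_power n)" using yt kp_top fm by blast
      fix U assume "openin (khalimsky_power n) U" "x \<in> U"
      then show "\<exists>p'\<in>U. f p' = f y" using kp_nbhd y by blast
    qed
    then show "f y = f x" by simp
  qed
  have const: "f x = f (restrict (\<lambda>_. 0) {..<n})" if "x \<in> topspace (khalimsky_power n)" for x
  proof -
    have "x \<in> PiE {..<n} (\<lambda>_. UNIV)" using that kp_top by simp
    then show ?thesis by (rule shift_const[OF nb_step[OF loc]])
  qed
  let ?z = "f (restrict (\<lambda>_. 0) {..<n})"
  have r: "restrict (\<lambda>_. 0) {..<n} \<in> topspace (khalimsky_power n)" by (simp add: kp_top)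
  have zt: "?z \<in> topspace (khalimsky_power n)" using fm r by blast
  have "closedin (khalimsky_power n) {?z}"
    using cg_closed_point[OF cg fm r] .
  then have ev: "\<And>i. i < n \<Longrightarrow> even (?z i)" using kp_closed_even by blast
  have "?z = restrict (\<lambda>i. 2 * (?z i div 2)) {..<n}"
  proof
    fix i show "?z i = restrict (\<lambda>i. 2 * (?z i div 2)) {..<n} i"
      using ev zt kp_top by (auto simp: PiE_iff extensional_def)
  qed
  then show "\<exists>l::nat \<Rightarrow> int. \<forall>x\<in>topspace (khalimsky_power n).
            f x = restrict (\<lambda>i. 2 * l i) {..<n}" using const by metis
next
  assume "\<exists>l::nat \<Rightarrow> int. \<forall>x\<in>topspace (khalimsky_power n).
            f x = restrict (\<lambda>i. 2 * l i) {..<n}"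
  then obtain l where l: "\<forall>x\<in>topspace (khalimsky_power n). f x = restrict (\<lambda>i. 2 * l i) {..<n}" by blast
  have "closedin (khalimsky_power n) {restrict (\<lambda>i. 2 * l i) {..<n}}"
    by (rule kp_closed_pt) auto
  moreover have "restrict (\<lambda>i. 2 * l i) {..<n} \<in> topspace (khalimsky_power n)" by (simp add: kp_top)
  ultimately show "closed_graph (khalimsky_power n) f" using cg_const l by metis
qed

lemma part3:
  fixes f :: "(nat \<Rightarrow> int) option \<Rightarrow> (nat \<Rightarrow> int) option"
  assumes n: "n \<ge> 1"
    and fm: "f ` topspace (alexandroff (khalimsky_power n)) \<subseteq> topspace (alexandroff (khalimsky_power n))"
  shows "closed_graph (alexandroff (khalimsky_power n)) f \<longleftrightarrow>
        ((\<exists>l::nat \<Rightarrow> int. \<forall>x\<in>topspace (alexandroff (khalimsky_power n)).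
            f x = Some (restrict (\<lambda>i. 2 * l i) {..<n})) \<or>
         (\<forall>x\<in>topspace (alexandroff (khalimsky_power n)). f x = None))"
proof
  let ?A = "alexandroff (khalimsky_power n)"
  have tA: "topspace ?A = insert None (Some ` PiE {..<n} (\<lambda>_. UNIV))" by (simp add: topspace_alex kp_top)
  assume cg: "closed_graph ?A f"
  have loc: "\<forall>x\<in>PiE {..<n} (\<lambda>_. UNIV). \<forall>y\<in>PiE {..<n} (\<lambda>i. nb (x i)). (f \<circ> Some) y = (f \<circ> Some) x"
  proof (intro ballI)
    fix x y assume x: "x \<in> PiE {..<n} (\<lambda>_. UNIV)" and y: "y \<in> PiE {..<n} (\<lambda>i. nb (x i))"
    have yt: "y \<in> PiE {..<n} (\<lambda>_. UNIV)" using y by (auto simp: PiE_iff)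
    have "f (Some x) = f (Some y)"
    proof (rule cg_const_lim[OF cg fm])
      show "Some x \<in> topspace ?A" using x tA by simp
      show "f (Some y) \<in> topspace ?A" using yt tA fm by blast
      fix U assume U: "openin ?A U" "Some x \<in> U"
      then have "openin (khalimsky_power n) (Some -` U)" using openin_alex aopen_def by blast
      then have "y \<in> Some -` U" using kp_nbhd y U(2) by blast
      then show "\<exists>p'\<in>U. f p' = f (Some y)" by blast
    qed
    then show "(f \<circ> Some) y = (f \<circ> Some) x" by simp
  qed
  define c where "c = f (Some (restrict (\<lambda>_. 0) {..<n}))"
  have constS: "f (Some x) = c" if "x \<in> PiE {..<n} (\<lambda>_. UNIV)" for x
    using shift_const[OF nb_step[OF loc] that] unfolding c_def by (simp only: o_def)
  have r: "Some (restrict (\<lambda>_. 0) {..<n}) \<in> topspace ?A" using tA by simp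
  have ct: "c \<in> topspace ?A" unfolding c_def using fm r by blast
  have cN: "f None = c"
  proof (rule cg_const_lim[OF cg fm])
    show "None \<in> topspace ?A" using tA by simp
    show "c \<in> topspace ?A" by (rule ct)
    fix U assume "openin ?A U" "None \<in> U"
    then obtain x where "x \<in> topspace (khalimsky_power n)" "Some x \<in> U"
      using alex_None_nbhd kp_not_compact[OF n] by blast
    then show "\<exists>p'\<in>U. f p' = c" using constS[of x] kp_top by auto
  qed
  have const: "f p = c" if "p \<in> topspace ?A" for p
    using that tA constS cN by auto
  have cl: "closedin ?A {c}" unfolding c_def using cg_closed_point[OF cg fm r] .
  show "(\<exists>l::nat \<Rightarrow> int. \<forall>x\<in>topspace ?A. f x = Some (restrict (\<lambda>i. 2 * l i) {..<n})) \<or>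
         (\<forall>x\<in>topspace ?A. f x = None)"
  proof (cases c)
    case None
    then show ?thesis using const by simp
  next
    case (Some z)
    then have zt: "z \<in> PiE {..<n} (\<lambda>_. UNIV)" using ct tA by auto
    have "closedin (khalimsky_power n) {z}" using cl Some alex_closed_Some by metis
    then have ev: "\<And>i. i < n \<Longrightarrow> even (z i)" using kp_closed_even by blast
    have "z = restrict (\<lambda>i. 2 * (z i div 2)) {..<n}"
    proof
      fix i show "z i = restrict (\<lambda>i. 2 * (z i div 2)) {..<n} i"
        using ev zt by (auto simp: PiE_iff extensional_def)
    qed
    then show ?thesis using const Some by metis
  qed
next
  let ?A = "alexandroff (khalimsky_power n)"
  have tA: "topspace ?A = insert None (Some ` PiE {..<n} (\<lambda>_. UNIV))" by (simp add: topspace_alex kp_top)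
  assume "(\<exists>l::nat \<Rightarrow> int. \<forall>x\<in>topspace ?A. f x = Some (restrict (\<lambda>i. 2 * l i) {..<n})) \<or>
         (\<forall>x\<in>topspace ?A. f x = None)"
  then show "closed_graph ?A f"
  proof
    assume "\<exists>l::nat \<Rightarrow> int. \<forall>x\<in>topspace ?A. f x = Some (restrict (\<lambda>i. 2 * l i) {..<n})"
    then obtain l where l: "\<forall>x\<in>topspace ?A. f x = Some (restrict (\<lambda>i. 2 * l i) {..<n})" by blast
    have "closedin (khalimsky_power n) {restrict (\<lambda>i. 2 * l i) {..<n}}"
      by (rule kp_closed_pt) auto
    then have "closedin ?A {Some (restrict (\<lambda>i. 2 * l i) {..<n})}" by (rule alex_closed_Some2)
    moreover have "Some (restrict (\<lambda>i. 2 * l i) {..<n}) \<in> topspace ?A" using tA by simp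
    ultimately show ?thesis using cg_const l by metis
  next
    assume "\<forall>x\<in>topspace ?A. f x = None"
    moreover have "None \<in> topspace ?A" using tA by simp
    ultimately show ?thesis using cg_const alex_closed_None by metis
  qed
qed

theorem mainTheorem5:
  fixes n :: nat
  assumes "n \<ge> 1"
  shows
   "(\<forall>(S::int set) (f::int \<Rightarrow> int).
       khalimsky_interval S \<and> (\<exists>a b. a \<in> S \<and> b \<in> S \<and> a \<noteq> b) \<and> f ` S \<subseteq> S \<longrightarrow>
       (closed_graph (subtopology khalimsky S) f \<longleftrightarrow>
        (\<exists>l::int. 2 * l \<in> S \<and> (\<forall>x\<in>S. f x = 2 * l))))
    \<and>
    (\<forall>f::(nat \<Rightarrow> int) \<Rightarrow> (nat \<Rightarrow> int).
       f ` topspace (khalimsky_power n) \<subseteq> topspace (khalimsky_power n) \<longrightarrow>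
       (closed_graph (khalimsky_power n) f \<longleftrightarrow>
        (\<exists>l::nat \<Rightarrow> int. \<forall>x\<in>topspace (khalimsky_power n).
            f x = restrict (\<lambda>i. 2 * l i) {..<n})))
    \<and>
    (\<forall>f::(nat \<Rightarrow> int) option \<Rightarrow> (nat \<Rightarrow> int) option.
       f ` topspace (alexandroff (khalimsky_power n)) \<subseteq> topspace (alexandroff (khalimsky_power n)) \<longrightarrow>
       (closed_graph (alexandroff (khalimsky_power n)) f \<longleftrightarrow>
        ((\<exists>l::nat \<Rightarrow> int. \<forall>x\<in>topspace (alexandroff (khalimsky_power n)).
            f x = Some (restrict (\<lambda>i. 2 * l i) {..<n})) \<or>
         (\<forall>x\<in>topspace (alexandroff (khalimsky_power n)). f x = None))))"
  proof (intro conjI allI impI)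
  fix S :: "int set" and f :: "int \<Rightarrow> int"
  assume h: "khalimsky_interval S \<and> (\<exists>a b. a \<in> S \<and> b \<in> S \<and> a \<noteq> b) \<and> f ` S \<subseteq> S"
  then obtain a b where "a \<in> S" "b \<in> S" "a \<noteq> b" by blast
  then show "closed_graph (subtopology khalimsky S) f \<longleftrightarrow>
        (\<exists>l::int. 2 * l \<in> S \<and> (\<forall>x\<in>S. f x = 2 * l))"
    using part1[of S a b f] h by blast
next
  fix f :: "(nat \<Rightarrow> int) \<Rightarrow> (nat \<Rightarrow> int)"
  assume "f ` topspace (khalimsky_power n) \<subseteq> topspace (khalimsky_power n)"
  then show "closed_graph (khalimsky_power n) f \<longleftrightarrow>
        (\<exists>l::nat \<Rightarrow> int. \<forall>x\<in>topspace (khalimsky_power n).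
            f x = restrict (\<lambda>i. 2 * l i) {..<n})" by (rule part2)
next
  fix f :: "(nat \<Rightarrow> int) option \<Rightarrow> (nat \<Rightarrow> int) option"
  assume "f ` topspace (alexandroff (khalimsky_power n)) \<subseteq> topspace (alexandroff (khalimsky_power n))"
  then show "closed_graph (alexandroff (khalimsky_power n)) f \<longleftrightarrow>
        ((\<exists>l::nat \<Rightarrow> int. \<forall>x\<in>topspace (alexandroff (khalimsky_power n)).
            f x = Some (restrict (\<lambda>i. 2 * l i) {..<n})) \<or>
         (\<forall>x\<in>topspace (alexandroff (khalimsky_power n)). f x = None))"
    by (rule part3[OF assms])
qed

end
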